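(* Let $(S,d)$ be a metric space, let $\bullet\in\{\mathrm{FM},\mathrm{BL}\}$, and let $\mu$ be a finite signed Borel measure on $S$ that is separable, i.e. there is a separable set $S_0\subset S$ with $|\mu|(S_0)=|\mu|(S)$. Then $$\|\mu\|_\bullet^*=\sup\Big\{\int_S f\,d\mu : f\in E^S_\bullet\Big\}.$$
   Context: $\mathrm{BL}(S)$ is the space of bounded real-valued Lipschitz functions on $S$, $|f|_L=\sup_{x\neq y}|f(x)-f(y)|/d(x,y)$ (with $|f|_L=0$ on a singleton), $\|f\|_{\mathrm{BL}}=\|f\|_\infty+|f|_L$, $\|f\|_{\mathrm{FM}}=\max(\|f\|_\infty,|f|_L)$, $B^S_\bullet=\{f\in\mathrm{BL}(S):\|f\|_\bullet\le1\}$, and $\|\mu\|^*_\bullet=\sup_{f\in B^S_\bullet}\int_S f\,d\mu$. $|\mu|$ is the total variation measure. Subsets $P\subset S$ carry the restricted metric; $\operatorname{ext}$ denotes extreme points and $\operatorname{ext}_*(B^P_\bullet)=\operatorname{ext}(B^P_\bullet)\setminus\{f:|f|=\mathbf{1}\}$. For non-empty $P\subset S$, $f\in\mathrm{BL}(P)$: $\mathcal{E}^{S,0}_P f(x)=\sup_{p\in P}[f(p)-|f|_L d(p,x)]$, $\mathcal{E}^S_P f=\max(\mathcal{E}^{S,0}_P f,-\|f\|_\infty)$. $E^S_{\mathrm{BL}}=\bigcup_{P\subset S\text{ finite}}\mathcal{E}^S_P(\operatorname{ext}_*(B^P_{\mathrm{BL}}))\cup\{\mathbf{1},-\mathbf{1}\}$;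 $E^S_{\mathrm{FM}}=\bigcup_{P\subset S\text{ finite}}\mathcal{E}^S_P(\operatorname{ext}_*(B^P_{\mathrm{FM}}))\cup\{f\in B^S_{\mathrm{FM}}:|f|=\mathbf{1}\}\cup\{h_P:P\subset S\text{ finite, non-empty}\}$, with $h_P(x)=\max\big(-1,\sup_{p\in P}[1-d(x,p)]\big)$. *)

theory Defs
  imports "HOL-Analysis.Analysis" "HOL-Probability.Probability"
begin

text \<open>Functions on a subset P of the metric space (type 'a) are represented as
  functions 'a => real that vanish outside P (so that convexity / extreme points
  are computed in the vector space of functions on P).\<close>

definition lip_seminorm :: "'a::metric_space set \<Rightarrow> ('a \<Rightarrow> real) \<Rightarrow> real" where
  "lip_seminorm P f =
     (if \<exists>x\<in>P. \<exists>y\<in>P. x \<noteq> y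
      then (SUP xy \<in> {(x,y). x \<in> P \<and> y \<in> P \<and> x \<noteq> y}. \<bar>f (fst xy) - f (snd xy)\<bar> / dist (fst xy) (snd xy))
      else 0)"

definition sup_norm_on :: "'a set \<Rightarrow> ('a \<Rightarrow> real) \<Rightarrow> real" where
  "sup_norm_on P f = (if P = {} then 0 else (SUP x\<in>P. \<bar>f x\<bar>))"

definition BL :: "'a::metric_space set \<Rightarrow> ('a \<Rightarrow> real) set" where
  "BL P = {f. (\<forall>x. x \<notin> P \<longrightarrow> f x = 0) \<and> bounded (f ` P) \<and> (\<exists>C. C-lipschitz_on P f)}"

datatype bl_kind = FM | BLk

definition bl_norm :: "bl_kind \<Rightarrow> 'a::metric_space set \<Rightarrow> ('a \<Rightarrow> real) \<Rightarrow> real" where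
  "bl_norm k P f = (case k of
      FM \<Rightarrow> max (sup_norm_on P f) (lip_seminorm P f)
    | BLk \<Rightarrow> sup_norm_on P f + lip_seminorm P f)"

definition unit_ball :: "bl_kind \<Rightarrow> 'a::metric_space set \<Rightarrow> ('a \<Rightarrow> real) set" where
  "unit_ball k P = {f \<in> BL P. bl_norm k P f \<le> 1}"

definition extreme_points :: "('a \<Rightarrow> real) set \<Rightarrow> ('a \<Rightarrow> real) set" where
  "extreme_points K = {f \<in> K. \<forall>g\<in>K. \<forall>h\<in>K. \<forall>t::real. 0 < t \<and> t < 1 \<and>
        f = (\<lambda>x. t * g x + (1 - t) * h x) \<longrightarrow> g = f \<and> h = f}"

definition extreme_points_star :: "bl_kind \<Rightarrow> 'a::metric_space set \<Rightarrow> ('a \<Rightarrow> real) set" where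
  "extreme_points_star k P = extreme_points (unit_ball k P) - {f. \<forall>x\<in>P. \<bar>f x\<bar> = 1}"

definition ext0_op :: "'a::metric_space set \<Rightarrow> ('a \<Rightarrow> real) \<Rightarrow> 'a \<Rightarrow> real" where
  "ext0_op P f x = (SUP p\<in>P. f p - lip_seminorm P f * dist p x)"

definition ext_op :: "'a::metric_space set \<Rightarrow> ('a \<Rightarrow> real) \<Rightarrow> 'a \<Rightarrow> real" where
  "ext_op P f x = max (ext0_op P f x) (- sup_norm_on P f)"

definition h_fun :: "'a::metric_space set \<Rightarrow> 'a \<Rightarrow> real" where
  "h_fun P x = max (-1) (SUP p\<in>P. 1 - dist x p)"

definition E_set :: "bl_kind \<Rightarrow> ('a::metric_space \<Rightarrow> real) set" where
  "E_set k = (\<Union>P\<in>{P. finite P \<and> P \<noteq> {}}. ext_op P ` extreme_points_star k P) \<union>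
     (case k of
        BLk \<Rightarrow> {(\<lambda>_. 1), (\<lambda>_. -1)}
      | FM \<Rightarrow> {f \<in> unit_ball FM UNIV. \<forall>x. \<bar>f x\<bar> = 1} \<union>
              {h_fun P | P. finite P \<and> P \<noteq> {}})"

text \<open>A finite signed Borel measure is given by its Jordan decomposition
  mu = mu_p - mu_n with mu_p, mu_n finite Borel measures that are mutually singular;
  the total variation is |mu| = mu_p + mu_n.\<close>

definition signed_integral :: "'a measure \<Rightarrow> 'a measure \<Rightarrow> ('a \<Rightarrow> real) \<Rightarrow> real" where
  "signed_integral mp mn f = integral\<^sup>L mp f - integral\<^sup>L mn f"

definition dual_norm :: "bl_kind \<Rightarrow> 'a::metric_space measure \<Rightarrow> 'a measure \<Rightarrow> real" where
  "dual_norm k mp mn = Sup (signed_integral mp mn ` unit_ball k UNIV)"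

end

theory Submission
  imports Defs
begin


lemma sup_norm_ge:
  assumes "bounded (f ` S)" "x \<in> S"
  shows "\<bar>f x\<bar> \<le> sup_norm_on S f"
proof -
  have "bdd_above ((\<lambda>x. \<bar>f x\<bar>) ` S)"
    using assms(1) unfolding bounded_iff bdd_above_def by (auto simp: real_norm_def)
  then show ?thesis using assms by (auto simp: sup_norm_on_def intro: cSUP_upper)
qed

lemma sup_norm_nonneg: assumes "bounded (f ` S)" shows "0 \<le> sup_norm_on S f"
proof (cases "S = {}")
  case True then show ?thesis by (simp add: sup_norm_on_def)
next
  case False
  then obtain x where "x \<in> S" by auto
  from sup_norm_ge[OF assms this] show ?thesis by (rule order_trans[OF abs_ge_zero])
qed

lemma lip_ge:
  assumes "C-lipschitz_on S f" "x \<in> S" "y \<in> S" "x \<noteq> y"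
  shows "\<bar>f x - f y\<bar> / dist x y \<le> lip_seminorm S f"
proof -
  have "bdd_above ((\<lambda>xy. \<bar>f (fst xy) - f (snd xy)\<bar> / dist (fst xy) (snd xy)) ` {(x,y). x \<in> S \<and> y \<in> S \<and> x \<noteq> y})"
  proof (rule bdd_aboveI2)
    fix xy assume "xy \<in> {(x,y). x \<in> S \<and> y \<in> S \<and> x \<noteq> y}"
    then show "\<bar>f (fst xy) - f (snd xy)\<bar> / dist (fst xy) (snd xy) \<le> C"
      using assms(1) by (auto simp: lipschitz_on_def dist_real_def divide_le_eq)
  qed
  then show ?thesis using assms unfolding lip_seminorm_def
    by (auto intro!: cSUP_upper2[where x="(x,y)"])
qed

lemma lip_nonneg: assumes "C-lipschitz_on S f" shows "0 \<le> lip_seminorm S f"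
proof (cases "\<exists>x\<in>S. \<exists>y\<in>S. x \<noteq> y")
  case True
  then obtain x y where "x \<in> S" "y \<in> S" "x \<noteq> y" by auto
  from lip_ge[OF assms this] show ?thesis by (rule order_trans[OF divide_nonneg_nonneg[OF abs_ge_zero zero_le_dist]])
qed (simp add: lip_seminorm_def)

lemma lip_ge':
  assumes "C-lipschitz_on S f" "x \<in> S" "y \<in> S"
  shows "\<bar>f x - f y\<bar> \<le> lip_seminorm S f * dist x y"
proof (cases "x = y")
  case True then show ?thesis using lip_nonneg[OF assms(1)] by simp
next
  case False
  then show ?thesis using lip_ge[OF assms False] by (simp add: divide_le_eq)
qed

lemma lip_le:
  assumes "L \<ge> 0" "\<And>x y. x \<in> S \<Longrightarrow> y \<in> S \<Longrightarrow> \<bar>f x - f y\<bar> \<le> L * dist x y"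
  shows "lip_seminorm S f \<le> L"
proof (cases "\<exists>x\<in>S. \<exists>y\<in>S. x \<noteq> y")
  case True
  have ne: "{(x,y). x \<in> S \<and> y \<in> S \<and> x \<noteq> y} \<noteq> {}" using True by auto
  have "(SUP xy \<in> {(x,y). x \<in> S \<and> y \<in> S \<and> x \<noteq> y}. \<bar>f (fst xy) - f (snd xy)\<bar> / dist (fst xy) (snd xy)) \<le> L"
  proof (rule cSUP_least[OF ne])
    fix xy assume "xy \<in> {(x,y). x \<in> S \<and> y \<in> S \<and> x \<noteq> y}"
    then have "fst xy \<in> S" "snd xy \<in> S" "fst xy \<noteq> snd xy" by auto
    then have "\<bar>f (fst xy) - f (snd xy)\<bar> \<le> L * dist (fst xy) (snd xy)" "dist (fst xy) (snd xy) > 0"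
      using assms(2) by auto
    then show "\<bar>f (fst xy) - f (snd xy)\<bar> / dist (fst xy) (snd xy) \<le> L"
      by (simp add: pos_divide_le_eq)
  qed
  then show ?thesis using True by (simp add: lip_seminorm_def)
qed (use assms(1) in \<open>simp add: lip_seminorm_def\<close>)

lemma sup_norm_le:
  assumes "L \<ge> 0" "\<And>x. x \<in> S \<Longrightarrow> \<bar>f x\<bar> \<le> L"
  shows "sup_norm_on S f \<le> L"
proof (cases "S = {}")
  case False
  have "(SUP x\<in>S. \<bar>f x\<bar>) \<le> L" by (rule cSUP_least[OF False assms(2)])
  then show ?thesis using False by (simp add: sup_norm_on_def)
qed (use assms(1) in \<open>simp add: sup_norm_on_def\<close>)

lemma max_lip:
  fixes e :: "'a::metric_space \<Rightarrow> real"
  assumes "\<And>x y. e x \<le> e y + L * dist x y"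
  shows "\<bar>max (e x) c - max (e y) c\<bar> \<le> L * dist x y"
proof -
  have a: "e x \<le> e y + L * dist x y" "e y \<le> e x + L * dist x y"
    using assms[of x y] assms[of y x] by (simp_all add: dist_commute)
  show ?thesis
  proof (cases "e x \<le> c"; cases "e y \<le> c")
  qed (use a in \<open>simp_all add: max_def abs_le_iff\<close>)
qed

definition cond :: "bl_kind \<Rightarrow> 'a::metric_space set \<Rightarrow> ('a \<Rightarrow> real) \<Rightarrow> bool" where
  "cond k S g = ((\<forall>x\<in>S. \<bar>g x\<bar> \<le> 1) \<and> (case k of
      FM \<Rightarrow> (\<forall>x\<in>S. \<forall>y\<in>S. x \<noteq> y \<longrightarrow> \<bar>g x - g y\<bar> / dist x y \<le> 1)
    | BLk \<Rightarrow> (\<forall>x\<in>S. \<forall>y\<in>S. \<forall>z\<in>S. y \<noteq> z \<longrightarrow> \<bar>g x\<bar> + \<bar>g y - g z\<bar> / dist y z \<le> 1)))"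

lemma ball_cond:
  assumes "f \<in> unit_ball k S"
  shows "cond k S f"
proof -
  from assms have b: "bounded (f ` S)" and n: "bl_norm k S f \<le> 1"
    and ex: "\<exists>C. C-lipschitz_on S f" by (auto simp: unit_ball_def BL_def)
  from ex obtain C where C: "C-lipschitz_on S f" by auto
  have s0: "0 \<le> sup_norm_on S f" by (rule sup_norm_nonneg[OF b])
  have l0: "0 \<le> lip_seminorm S f" by (rule lip_nonneg[OF C])
  have sl: "sup_norm_on S f \<le> 1" "lip_seminorm S f \<le> 1"
    using n s0 l0 by (cases k; simp add: bl_norm_def)+
  have a: "\<forall>x\<in>S. \<bar>f x\<bar> \<le> 1"
  proof
    fix x assume "x \<in> S"
    from sup_norm_ge[OF b this] sl(1) show "\<bar>f x\<bar> \<le> 1" by linarith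
  qed
  show ?thesis
  proof (cases k)
    case FM
    have "\<forall>x\<in>S. \<forall>y\<in>S. x \<noteq> y \<longrightarrow> \<bar>f x - f y\<bar> / dist x y \<le> 1"
    proof (intro ballI impI)
      fix x y assume "x \<in> S" "y \<in> S" "x \<noteq> y"
      from lip_ge[OF C this] sl(2) show "\<bar>f x - f y\<bar> / dist x y \<le> 1" by linarith
    qed
    then show ?thesis using a FM by (simp add: cond_def)
  next
    case BLk
    have "\<forall>x\<in>S. \<forall>y\<in>S. \<forall>z\<in>S. y \<noteq> z \<longrightarrow> \<bar>f x\<bar> + \<bar>f y - f z\<bar> / dist y z \<le> 1"
    proof (intro ballI impI)
      fix x y z assume "x \<in> S" "y \<in> S" "z \<in> S" "y \<noteq> z"
      have "sup_norm_on S f + lip_seminorm S f \<le> 1" using n BLk by (simp add: bl_norm_def)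
      then show "\<bar>f x\<bar> + \<bar>f y - f z\<bar> / dist y z \<le> 1"
        using sup_norm_ge[OF b \<open>x \<in> S\<close>] lip_ge[OF C \<open>y \<in> S\<close> \<open>z \<in> S\<close> \<open>y \<noteq> z\<close>] by linarith
    qed
    then show ?thesis using a BLk by (simp add: cond_def)
  qed
qed

lemma cond_lip: "cond k S g \<Longrightarrow> x \<in> S \<Longrightarrow> y \<in> S \<Longrightarrow> \<bar>g x - g y\<bar> \<le> dist x y"
proof (cases "x = y")
  case False
  assume c: "cond k S g" "x \<in> S" "y \<in> S"
  have "\<bar>g x - g y\<bar> / dist x y \<le> 1"
  proof (cases k)
    case FM then show ?thesis using c False by (auto simp: cond_def)
  next
    case BLk
    then have "\<bar>g x\<bar> + \<bar>g x - g y\<bar> / dist x y \<le> 1" using c False by (auto simp: cond_def)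
    then show ?thesis using abs_ge_zero[of "g x"] by linarith
  qed
  then show ?thesis using False by (simp add: divide_le_eq)
qed simp

lemma cond_ball:
  assumes "finite P" "P \<noteq> {}" "\<And>x. x \<notin> P \<Longrightarrow> g x = 0" "cond k P g"
  shows "g \<in> unit_ball k P"
proof -
  have lip1: "1-lipschitz_on P g"
    using cond_lip[OF assms(4)] by (auto simp: lipschitz_on_def dist_real_def)
  have bnd: "bounded (g ` P)" using assms(1) by (simp add: finite_imp_bounded)
  have inBL: "g \<in> BL P" using assms(3) lip1 bnd by (auto simp: BL_def)
  have abs1: "\<And>x. x \<in> P \<Longrightarrow> \<bar>g x\<bar> \<le> 1" using assms(4) by (auto simp: cond_def)
  have s1: "sup_norm_on P g \<le> 1" by (rule sup_norm_le) (use abs1 in auto)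
  have l1: "lip_seminorm P g \<le> 1" by (rule lip_le) (use cond_lip[OF assms(4)] in auto)
  have "bl_norm k P g \<le> 1"
  proof (cases k)
    case FM then show ?thesis using s1 l1 by (simp add: bl_norm_def)
  next
    case BLk
    obtain x0 where x0: "x0 \<in> P" "sup_norm_on P g = \<bar>g x0\<bar>"
    proof -
      have "Max ((\<lambda>x. \<bar>g x\<bar>) ` P) \<in> (\<lambda>x. \<bar>g x\<bar>) ` P"
        using assms(1,2) by (intro Max_in) auto
      moreover have "sup_norm_on P g = Max ((\<lambda>x. \<bar>g x\<bar>) ` P)"
        using assms(1,2) by (simp add: sup_norm_on_def cSup_eq_Max)
      ultimately show ?thesis using that by auto
    qed
    have "lip_seminorm P g \<le> 1 - \<bar>g x0\<bar>"
    proof (cases "\<exists>x\<in>P. \<exists>y\<in>P. x \<noteq> y")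
      case True
      have "\<And>a b. a \<in> P \<Longrightarrow> b \<in> P \<Longrightarrow> a \<noteq> b \<Longrightarrow> \<bar>g a - g b\<bar> / dist a b \<le> 1 - \<bar>g x0\<bar>"
      proof -
        fix a b assume "a \<in> P" "b \<in> P" "a \<noteq> b"
        then have "\<bar>g x0\<bar> + \<bar>g a - g b\<bar> / dist a b \<le> 1"
          using assms(4) BLk x0(1) by (auto simp: cond_def)
        then show "\<bar>g a - g b\<bar> / dist a b \<le> 1 - \<bar>g x0\<bar>" by simp
      qed
      then show ?thesis unfolding lip_seminorm_def using True
        by (auto intro!: cSUP_least)
    next
      case False then show ?thesis using abs1[OF x0(1)] by (simp add: lip_seminorm_def)
    qed
    then show ?thesis using BLk x0 by (simp add: bl_norm_def)
  qed
  then show ?thesis using inBL by (simp add: unit_ball_def)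
qed



lemma ball_props:
  assumes "f \<in> unit_ball k S"
  shows "bounded (f ` S)" "\<exists>C. C-lipschitz_on S f" "\<And>x. x \<notin> S \<Longrightarrow> f x = 0"
  using assms by (auto simp: unit_ball_def BL_def)

lemma ext_op_props:
  assumes P: "finite P" "P \<noteq> {}" and g: "g \<in> unit_ball k P"
  shows "ext_op P g \<in> unit_ball k UNIV" "\<And>p. p \<in> P \<Longrightarrow> ext_op P g p = g p"
proof -
  define L where "L = lip_seminorm P g"
  define M where "M = sup_norm_on P g"
  obtain C where C: "C-lipschitz_on P g" using ball_props(2)[OF g] by auto
  have bnd: "bounded (g ` P)" using ball_props(1)[OF g] .
  have L0: "L \<ge> 0" unfolding L_def by (rule lip_nonneg[OF C])
  have M0: "M \<ge> 0" unfolding M_def by (rule sup_norm_nonneg[OF bnd])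
  have gl: "\<And>x y. x \<in> P \<Longrightarrow> y \<in> P \<Longrightarrow> \<bar>g x - g y\<bar> \<le> L * dist x y"
    unfolding L_def by (rule lip_ge'[OF C])
  have gm: "\<And>x. x \<in> P \<Longrightarrow> \<bar>g x\<bar> \<le> M" unfolding M_def by (rule sup_norm_ge[OF bnd])
  define e0 where "e0 = (\<lambda>x. SUP p\<in>P. g p - L * dist p x)"
  have e0_def': "ext0_op P g = e0" unfolding e0_def ext0_op_def L_def by auto
  have bdd: "\<And>x. bdd_above ((\<lambda>p. g p - L * dist p x) ` P)" using P(1) by simp
  have e0_ge: "\<And>x p. p \<in> P \<Longrightarrow> g p - L * dist p x \<le> e0 x"
    unfolding e0_def by (rule cSUP_upper[OF _ bdd])
  have e0_le: "\<And>x c. (\<And>p. p \<in> P \<Longrightarrow> g p - L * dist p x \<le> c) \<Longrightarrow> e0 x \<le> c"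
    unfolding e0_def using P(2) by (rule cSUP_least)
  have e0M: "\<And>x. e0 x \<le> M"
  proof (rule e0_le)
    fix x p assume p: "p \<in> P"
    have "0 \<le> L * dist p x" using L0 by simp
    moreover have "g p \<le> M" using gm[OF p] by (simp add: abs_le_iff)
    ultimately show "g p - L * dist p x \<le> M" by linarith
  qed
  have e0lip: "\<And>x y. e0 x \<le> e0 y + L * dist x y"
  proof (rule e0_le)
    fix x y p assume "p \<in> P"
    have "g p - L * dist p y \<le> e0 y" by (rule e0_ge[OF \<open>p \<in> P\<close>])
    moreover have "dist p y \<le> dist p x + dist x y" by (rule dist_triangle)
    ultimately show "g p - L * dist p x \<le> e0 y + L * dist x y"
    proof -
      assume a: "g p - L * dist p y \<le> e0 y" and b: "dist p y \<le> dist p x + dist x y"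
      have "L * dist p y \<le> L * (dist p x + dist x y)" by (rule mult_left_mono[OF b L0])
      then show ?thesis using a by (simp add: distrib_left)
    qed
  qed
  have eq: "ext_op P g = (\<lambda>x. max (e0 x) (- M))" unfolding ext_op_def e0_def' M_def by (rule ext) simp
  have elip: "\<And>x y. \<bar>ext_op P g x - ext_op P g y\<bar> \<le> L * dist x y"
    unfolding eq by (rule max_lip[OF e0lip])
  have eM: "\<And>x. \<bar>ext_op P g x\<bar> \<le> M" unfolding eq using e0M M0 by (simp add: abs_le_iff max_def)
  show onP: "\<And>p. p \<in> P \<Longrightarrow> ext_op P g p = g p"
  proof -
    fix p assume p: "p \<in> P"
    have "g p \<le> e0 p" using e0_ge[OF p, of p] by simp
    moreover have "e0 p \<le> g p" proof (rule e0_le)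
      fix q assume q: "q \<in> P"
      have "g q - g p \<le> L * dist q p" using gl[OF q p] by (simp add: abs_le_iff)
      then show "g q - L * dist q p \<le> g p" by linarith
    qed
    ultimately show "ext_op P g p = g p" unfolding eq using gm[OF p] by auto
  qed
  have inBL: "ext_op P g \<in> BL UNIV"
  proof -
    have "bounded (range (ext_op P g))" using eM unfolding bounded_iff by auto
    moreover have "L-lipschitz_on UNIV (ext_op P g)" using elip L0
      by (auto simp: lipschitz_on_def dist_real_def)
    ultimately show ?thesis by (auto simp: BL_def)
  qed
  have s: "sup_norm_on UNIV (ext_op P g) \<le> M" by (rule sup_norm_le[OF M0]) (use eM in auto)
  have l: "lip_seminorm UNIV (ext_op P g) \<le> L" by (rule lip_le[OF L0]) (use elip in auto)
  have "bl_norm k UNIV (ext_op P g) \<le> bl_norm k P g"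
    using s l unfolding L_def M_def bl_norm_def by (cases k) auto
  also have "\<dots> \<le> 1" using g by (simp add: unit_ball_def)
  finally show "ext_op P g \<in> unit_ball k UNIV" using inBL by (simp add: unit_ball_def)
qed

lemma const_ball:
  assumes "\<bar>c\<bar> = 1"
  shows "(\<lambda>_. c) \<in> unit_ball k UNIV"
proof -
  have "bounded (range (\<lambda>_::'a. c))" by simp
  moreover have "0-lipschitz_on UNIV (\<lambda>_::'a. c)" by (auto simp: lipschitz_on_def)
  ultimately have "(\<lambda>_::'a. c) \<in> BL UNIV" by (auto simp: BL_def)
  moreover have "sup_norm_on UNIV (\<lambda>_::'a. c) \<le> 1" by (rule sup_norm_le) (use assms in auto)
  moreover have "lip_seminorm UNIV (\<lambda>_::'a. c) \<le> 0" by (rule lip_le) auto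
  ultimately show ?thesis by (cases k) (auto simp: unit_ball_def bl_norm_def)
qed

lemma h_fun_props:
  assumes Q: "finite Q" "Q \<noteq> {}"
  shows "h_fun Q \<in> unit_ball FM UNIV" "\<And>q. q \<in> Q \<Longrightarrow> h_fun Q q = 1"
    "\<And>x. (\<And>q. q \<in> Q \<Longrightarrow> dist x q \<ge> 2) \<Longrightarrow> h_fun Q x = -1"
proof -
  define e0 where "e0 = (\<lambda>x. SUP q\<in>Q. 1 - dist x q)"
  have eq: "h_fun Q = (\<lambda>x. max (-1) (e0 x))" unfolding h_fun_def e0_def by (rule ext) simp
  have bdd: "\<And>x. bdd_above ((\<lambda>q. 1 - dist x q) ` Q)" using Q(1) by simp
  have e0_ge: "\<And>x q. q \<in> Q \<Longrightarrow> 1 - dist x q \<le> e0 x"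
    unfolding e0_def by (rule cSUP_upper[OF _ bdd])
  have e0_le: "\<And>x c. (\<And>q. q \<in> Q \<Longrightarrow> 1 - dist x q \<le> c) \<Longrightarrow> e0 x \<le> c"
    unfolding e0_def using Q(2) by (rule cSUP_least)
  have e01: "\<And>x. e0 x \<le> 1" by (rule e0_le) simp
  have e0lip: "\<And>x y. e0 x \<le> e0 y + dist x y"
  proof (rule e0_le)
    fix x y q assume "q \<in> Q"
    have "1 - dist y q \<le> e0 y" by (rule e0_ge[OF \<open>q \<in> Q\<close>])
    moreover have "dist y q \<le> dist y x + dist x q" by (rule dist_triangle)
    ultimately show "1 - dist x q \<le> e0 y + dist x y" by (simp add: dist_commute)
  qed
  have elip: "\<And>x y. \<bar>h_fun Q x - h_fun Q y\<bar> \<le> 1 * dist x y"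
  proof -
    fix x y
    have "\<bar>max (e0 x) (-1) - max (e0 y) (-1)\<bar> \<le> 1 * dist x y" by (rule max_lip) (use e0lip in simp)
    then show "\<bar>h_fun Q x - h_fun Q y\<bar> \<le> 1 * dist x y" unfolding eq by (simp add: max.commute)
  qed
  have eM: "\<And>x. \<bar>h_fun Q x\<bar> \<le> 1" unfolding eq using e01 by (simp add: abs_le_iff max_def)
  have inBL: "h_fun Q \<in> BL UNIV"
  proof -
    have "bounded (range (h_fun Q))" using eM unfolding bounded_iff by auto
    moreover have "1-lipschitz_on UNIV (h_fun Q)" using elip
      by (auto simp: lipschitz_on_def dist_real_def)
    ultimately show ?thesis by (auto simp: BL_def)
  qed
  have s: "sup_norm_on UNIV (h_fun Q) \<le> 1" by (rule sup_norm_le) (use eM in auto)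
  have l: "lip_seminorm UNIV (h_fun Q) \<le> 1" by (rule lip_le) (use elip in auto)
  show "h_fun Q \<in> unit_ball FM UNIV" using inBL s l by (auto simp: unit_ball_def bl_norm_def)
  show "\<And>q. q \<in> Q \<Longrightarrow> h_fun Q q = 1"
  proof -
    fix q assume "q \<in> Q"
    then have "1 \<le> e0 q" using e0_ge[of q q] by simp
    then show "h_fun Q q = 1" unfolding eq using e01[of q] by simp
  qed
  show "\<And>x. (\<And>q. q \<in> Q \<Longrightarrow> dist x q \<ge> 2) \<Longrightarrow> h_fun Q x = -1"
  proof -
    fix x assume "\<And>q. q \<in> Q \<Longrightarrow> dist x q \<ge> 2"
    then have "e0 x \<le> -1" by (intro e0_le) force
    then show "h_fun Q x = -1" unfolding eq by simp
  qed
qed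

lemma E_sub_ball: "E_set k \<subseteq> unit_ball k UNIV"
proof
  fix e assume "e \<in> E_set k"
  then consider (a) P g where "finite P" "P \<noteq> {}" "g \<in> extreme_points_star k P" "e = ext_op P g"
    | (b) "k = BLk" "e = (\<lambda>_. 1) \<or> e = (\<lambda>_. -1)"
    | (c) "k = FM" "e \<in> unit_ball FM UNIV"
    | (d) Q where "k = FM" "finite Q" "Q \<noteq> {}" "e = h_fun Q"
    unfolding E_set_def by (cases k) auto
  then show "e \<in> unit_ball k UNIV"
  proof cases
    case (a P g)
    then have "g \<in> unit_ball k P" by (auto simp: extreme_points_star_def extreme_points_def)
    then show ?thesis using ext_op_props(1)[OF a(1,2)] a(4) by auto
  next
    case b then show ?thesis using const_ball[of 1 k] const_ball[of "-1" k] by auto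
  next
    case c then show ?thesis by simp
  next
    case (d Q) then show ?thesis using h_fun_props(1)[OF d(2,3)] by simp
  qed
qed



lemma closed_guard:
  fixes F :: "'i \<Rightarrow> ('a \<Rightarrow> real) \<Rightarrow> real"
  assumes "\<And>i. A i \<Longrightarrow> continuous_on UNIV (F i)"
  shows "closed {g. \<forall>i. A i \<longrightarrow> F i g \<le> c i}"
proof -
  have "{g. \<forall>i. A i \<longrightarrow> F i g \<le> c i} = (\<Inter>i\<in>{i. A i}. {g. F i g \<le> c i})" by auto
  moreover have "closed (\<Inter>i\<in>{i. A i}. {g. F i g \<le> c i})"
    by (intro closed_INT ballI closed_Collect_le) (auto intro: assms continuous_on_const)
  ultimately show ?thesis by simp
qed

lemma coord_cont: "continuous_on UNIV (\<lambda>g::'a\<Rightarrow>real. g x)"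
  by simp

lemma ball_eq:
  assumes "finite P" "P \<noteq> {}"
  shows "unit_ball k P = {g. (\<forall>x. x \<notin> P \<longrightarrow> g x = 0) \<and> cond k P g}"
  using assms ball_cond ball_props(3) cond_ball by blast

lemma compact_ball:
  assumes P: "finite P" "P \<noteq> {}"
  shows "compact (unit_ball k P)"
proof -
  define B where "B = (\<lambda>x::'a. if x \<in> P then {-1..1::real} else {0})"
  have "compactin (product_topology (\<lambda>_. euclidean) UNIV) (PiE UNIV B)"
    by (subst compactin_PiE) (auto simp: B_def)
  then have cB: "compact (Pi UNIV B)"
    by (simp add: euclidean_product_topology compactin_euclidean_iff PiE_UNIV_domain)
  have sub: "unit_ball k P \<subseteq> Pi UNIV B"
    using ball_cond ball_props(3) by (fastforce simp: B_def cond_def abs_le_iff)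
  define C1 where "C1 = {g::'a\<Rightarrow>real. \<forall>x. x \<notin> P \<longrightarrow> \<bar>g x\<bar> \<le> 0}"
  define C2 where "C2 = {g::'a\<Rightarrow>real. \<forall>x. x \<in> P \<longrightarrow> \<bar>g x\<bar> \<le> 1}"
  define C3 where "C3 = (case k of
      FM \<Rightarrow> {g::'a\<Rightarrow>real. \<forall>xy. (fst xy \<in> P \<and> snd xy \<in> P \<and> fst xy \<noteq> snd xy) \<longrightarrow>
               \<bar>g (fst xy) - g (snd xy)\<bar> / dist (fst xy) (snd xy) \<le> 1}
    | BLk \<Rightarrow> {g::'a\<Rightarrow>real. \<forall>xyz. (fst xyz \<in> P \<and> fst (snd xyz) \<in> P \<and> snd (snd xyz) \<in> P \<and> fst (snd xyz) \<noteq> snd (snd xyz)) \<longrightarrow>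
               \<bar>g (fst xyz)\<bar> + \<bar>g (fst (snd xyz)) - g (snd (snd xyz))\<bar> / dist (fst (snd xyz)) (snd (snd xyz)) \<le> 1})"
  have c1: "closed C1" unfolding C1_def
    by (rule closed_guard[where F="\<lambda>x g. \<bar>g x\<bar>"]) (intro continuous_intros coord_cont)
  have c2: "closed C2" unfolding C2_def
    by (rule closed_guard[where F="\<lambda>x g. \<bar>g x\<bar>"]) (intro continuous_intros coord_cont)
  have c3: "closed C3"
  proof (cases k)
    case FM show ?thesis unfolding C3_def FM bl_kind.case(1)
      by (rule closed_guard[where F="\<lambda>xy g. \<bar>g (fst xy) - g (snd xy)\<bar> / dist (fst xy) (snd xy)"])
        (auto intro!: continuous_intros coord_cont)
  next
    case BLk show ?thesis unfolding C3_def BLk bl_kind.case(2)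
      by (rule closed_guard[where F="\<lambda>xyz g. \<bar>g (fst xyz)\<bar> + \<bar>g (fst (snd xyz)) - g (snd (snd xyz))\<bar> / dist (fst (snd xyz)) (snd (snd xyz))"])
        (auto intro!: continuous_intros coord_cont)
  qed
  have "unit_ball k P = C1 \<inter> C2 \<inter> C3"
    unfolding ball_eq[OF P] C1_def C2_def C3_def cond_def by (cases k) auto
  then have "closed (unit_ball k P)" using c1 c2 c3 by auto
  then show ?thesis using cB sub by (metis compact_Int_closed inf.absorb_iff2)
qed

lemma max_extreme:
  fixes K :: "('a \<Rightarrow> real) set" and Lam :: "('a \<Rightarrow> real) \<Rightarrow> real"
  assumes K: "compact K" "K \<noteq> {}" and P: "finite P" and van: "\<And>g x. g \<in> K \<Longrightarrow> x \<notin> P \<Longrightarrow> g x = 0"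
    and cL: "continuous_on UNIV Lam"
    and aff: "\<And>g h t. Lam (\<lambda>x. t * g x + (1-t) * h x) = t * Lam g + (1-t) * Lam h"
  shows "\<exists>g\<in>extreme_points K. \<forall>h\<in>K. Lam h \<le> Lam g"
proof -
  obtain g1 where g1: "g1 \<in> K" "\<And>h. h \<in> K \<Longrightarrow> Lam h \<le> Lam g1"
    using compact_attains_sup[OF compact_continuous_image[OF continuous_on_subset[OF cL] K(1)]] K(2)
    by auto
  define F where "F = K \<inter> {g. Lam g = Lam g1}"
  have "closed {g. Lam g = Lam g1}" by (rule closed_Collect_eq[OF cL continuous_on_const])
  then have cF: "compact F" unfolding F_def using K(1) by (rule compact_Int_closed[rotated]) 
  have Fne: "F \<noteq> {}" using g1 unfolding F_def by auto
  define Q where "Q = (\<lambda>g::'a\<Rightarrow>real. \<Sum>p\<in>P. (g p)\<^sup>2)"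
  have cQ: "continuous_on UNIV Q" unfolding Q_def by (intro continuous_intros coord_cont)
  obtain g where g: "g \<in> F" "\<And>h. h \<in> F \<Longrightarrow> Q h \<le> Q g"
    using compact_attains_sup[OF compact_continuous_image[OF continuous_on_subset[OF cQ] cF]] Fne
    by auto
  have "g \<in> extreme_points K"
    unfolding extreme_points_def
  proof (intro CollectI conjI ballI allI impI)
    show "g \<in> K" using g(1) by (simp add: F_def)
    fix h1 h2 t assume h: "h1 \<in> K" "h2 \<in> K" and tg: "0 < t \<and> t < 1 \<and> g = (\<lambda>x. t * h1 x + (1 - t) * h2 x)"
    then have t: "0 < t" "t < 1" and geq: "g = (\<lambda>x. t * h1 x + (1 - t) * h2 x)" by auto
    have Lg: "Lam g = Lam g1" using g(1) by (simp add: F_def)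
    have e1: "Lam g = t * Lam h1 + (1-t) * Lam h2" using aff geq by simp
    have le: "Lam h1 \<le> Lam g" "Lam h2 \<le> Lam g" using g1(2) h Lg by auto
    have "t * (Lam g - Lam h1) + (1-t) * (Lam g - Lam h2) = 0"
      using e1 by (simp add: algebra_simps)
    moreover have "t * (Lam g - Lam h1) \<ge> 0" "(1-t) * (Lam g - Lam h2) \<ge> 0"
      using t le by simp_all
    ultimately have "t * (Lam g - Lam h1) = 0" "(1-t) * (Lam g - Lam h2) = 0" by linarith+
    then have "Lam h1 = Lam g" "Lam h2 = Lam g" using t by auto
    then have hF: "h1 \<in> F" "h2 \<in> F" using h Lg by (auto simp: F_def)
    have idt: "\<And>a b. (t * a + (1-t) * b)\<^sup>2 = t * a\<^sup>2 + (1-t) * b\<^sup>2 - t * (1-t) * (a - b)\<^sup>2"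
      by (simp add: power2_eq_square algebra_simps)
    have "Q g = t * Q h1 + (1-t) * Q h2 - t * (1-t) * (\<Sum>p\<in>P. (h1 p - h2 p)\<^sup>2)"
      unfolding Q_def geq idt by (simp add: sum_subtractf sum_distrib_left sum.distrib)
    moreover have "Q h1 \<le> Q g" "Q h2 \<le> Q g" using g(2) hF by auto
    moreover have "t * Q h1 \<le> t * Q g" "(1-t) * Q h2 \<le> (1-t) * Q g"
      using t calculation(2,3) by (simp_all add: mult_left_mono)
    ultimately have "t * (1-t) * (\<Sum>p\<in>P. (h1 p - h2 p)\<^sup>2) \<le> 0"
      by (simp add: algebra_simps)
    moreover have "t * (1-t) > 0" using t by simp
    ultimately have "(\<Sum>p\<in>P. (h1 p - h2 p)\<^sup>2) \<le> 0"
      by (metis mult_pos_pos not_le)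
    then have "\<forall>p\<in>P. (h1 p - h2 p)\<^sup>2 = 0"
      using sum_nonneg_eq_0_iff[OF P, of "\<lambda>p. (h1 p - h2 p)\<^sup>2"] by (simp add: order_antisym sum_nonneg)
    then have "h1 = h2" using van h by (metis ext eq_iff_diff_eq_0 power_eq_0_iff zero_neq_numeral)
    then show "h1 = g" "h2 = g" using geq by (auto simp: fun_eq_iff algebra_simps)
  qed
  moreover have "\<forall>h\<in>K. Lam h \<le> Lam g" using g(1) g1(2) by (simp add: F_def)
  ultimately show ?thesis by blast
qed




lemma E_ext: "finite P \<Longrightarrow> P \<noteq> {} \<Longrightarrow> g \<in> extreme_points_star k P \<Longrightarrow> ext_op P g \<in> E_set k"
  unfolding E_set_def by (rule UnI1, rule UN_I[of P]) auto

lemma E_const_BL: "c = 1 \<or> c = -1 \<Longrightarrow> (\<lambda>_. c) \<in> E_set BLk"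
  unfolding E_set_def by auto

lemma E_FM1: "f \<in> unit_ball FM UNIV \<Longrightarrow> \<forall>x. \<bar>f x\<bar> = 1 \<Longrightarrow> f \<in> E_set FM"
  unfolding E_set_def by (rule UnI2) simp

lemma E_FM2: "finite Q \<Longrightarrow> Q \<noteq> {} \<Longrightarrow> h_fun Q \<in> E_set FM"
  unfolding E_set_def by (rule UnI2) auto


lemma key_finite:
  fixes f :: "'a::metric_space \<Rightarrow> real"
  assumes f: "f \<in> unit_ball k UNIV" and P: "finite P" "P \<noteq> {}" and d: "\<And>j. j < N \<Longrightarrow> d j \<in> P"
  shows "\<exists>e\<in>E_set k. (\<Sum>j<N. c j * f (d j)) \<le> (\<Sum>j<N. c j * e (d j))"
proof -
  define Lam where "Lam = (\<lambda>g::'a\<Rightarrow>real. \<Sum>j<N. c j * g (d j))"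
  have Lcong: "\<And>g h. (\<And>x. x \<in> P \<Longrightarrow> g x = h x) \<Longrightarrow> Lam g = Lam h"
    unfolding Lam_def using d by (intro sum.cong) auto
  define g0 where "g0 = (\<lambda>x. if x \<in> P then f x else 0)"
  have cf: "cond k UNIV f" by (rule ball_cond[OF f])
  have "cond k P g0"
  proof (cases k)
    case FM then show ?thesis using cf unfolding cond_def g0_def by simp
  next
    case BLk then show ?thesis using cf unfolding cond_def g0_def by simp
  qed
  then have g0K: "g0 \<in> unit_ball k P" by (intro cond_ball[OF P]) (auto simp: g0_def)
  have "\<exists>g\<in>extreme_points (unit_ball k P). \<forall>h\<in>unit_ball k P. Lam h \<le> Lam g"
  proof (rule max_extreme[OF compact_ball[OF P] _ P(1)])
    show "unit_ball k P \<noteq> {}" using g0K by auto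
    show "\<And>g x. g \<in> unit_ball k P \<Longrightarrow> x \<notin> P \<Longrightarrow> g x = 0" by (rule ball_props(3))
    show "continuous_on UNIV Lam" unfolding Lam_def by (intro continuous_intros coord_cont)
    show "\<And>g h t. Lam (\<lambda>x. t * g x + (1 - t) * h x) = t * Lam g + (1 - t) * Lam h"
    proof -
      fix g h :: "'a \<Rightarrow> real" and t :: real
      have "(\<Sum>j<N. c j * (t * g (d j) + (1-t) * h (d j))) = (\<Sum>j<N. t * (c j * g (d j)) + (1-t) * (c j * h (d j)))"
        by (rule sum.cong) (simp_all add: algebra_simps)
      also have "\<dots> = t * (\<Sum>j<N. c j * g (d j)) + (1-t) * (\<Sum>j<N. c j * h (d j))"
        by (simp add: sum.distrib sum_distrib_left)
      finally show "Lam (\<lambda>x. t * g x + (1 - t) * h x) = t * Lam g + (1 - t) * Lam h"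
        unfolding Lam_def by simp
    qed
  qed
  then obtain g where g: "g \<in> extreme_points (unit_ball k P)" "Lam g0 \<le> Lam g"
    using g0K by blast
  have gK: "g \<in> unit_ball k P" using g(1) by (simp add: extreme_points_def)
  have cg: "cond k P g" by (rule ball_cond[OF gK])
  have "Lam f = Lam g0" by (rule Lcong) (simp add: g0_def)
  with g(2) have fg: "Lam f \<le> Lam g" by simp
  have "\<exists>e\<in>E_set k. \<forall>x\<in>P. e x = g x"
  proof (cases "g \<in> extreme_points_star k P")
    case True
    then have "ext_op P g \<in> E_set k" using P by (intro E_ext)
    then show ?thesis using ext_op_props(2)[OF P gK] by blast
  next
    case False
    then have one: "\<forall>x\<in>P. \<bar>g x\<bar> = 1" using g(1) by (simp add: extreme_points_star_def)
    show ?thesis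
    proof (cases k)
      case BLk
      obtain p0 where p0: "p0 \<in> P" using P(2) by auto
      have const: "\<forall>x\<in>P. g x = g p0"
      proof
        fix x assume x: "x \<in> P"
        show "g x = g p0"
        proof (rule ccontr)
          assume ne: "g x \<noteq> g p0"
          then have "x \<noteq> p0" by auto
          then have "\<bar>g x\<bar> + \<bar>g x - g p0\<bar> / dist x p0 \<le> 1"
            using cg BLk x p0 by (auto simp: cond_def)
          then have "\<bar>g x - g p0\<bar> / dist x p0 \<le> 0" using one x by simp
          moreover have "\<bar>g x - g p0\<bar> / dist x p0 > 0" using ne \<open>x \<noteq> p0\<close> by simp
          ultimately show False by simp
        qed
      qed
      have "g p0 = 1 \<or> g p0 = -1" using one p0 by (auto simp: abs_if split: if_splits)
      then have "(\<lambda>_. g p0) \<in> E_set k" unfolding BLk by (rule E_const_BL)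
      then show ?thesis using const by auto
    next
      case FM
      define Pp where "Pp = {p\<in>P. g p = 1}"
      show ?thesis
      proof (cases "Pp = {}")
        case True
        then have m: "\<forall>x\<in>P. g x = -1" using one unfolding Pp_def by (force simp: abs_if split: if_splits)
        have "(\<lambda>_. -1) \<in> E_set k" unfolding FM by (rule E_FM1[OF const_ball]) auto
        then show ?thesis using m by auto
      next
        case False
        have fin: "finite Pp" using P(1) by (simp add: Pp_def)
        have "h_fun Pp \<in> E_set k" unfolding FM by (rule E_FM2[OF fin False])
        moreover have "\<forall>x\<in>P. h_fun Pp x = g x"
        proof
          fix x assume x: "x \<in> P"
          show "h_fun Pp x = g x"
          proof (cases "g x = 1")
            case True then show ?thesis using h_fun_props(2)[OF fin False] x by (simp add: Pp_def)
          next
            case gx: False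
            then have gm: "g x = -1" using one x by (force simp: abs_if split: if_splits)
            have "h_fun Pp x = -1"
            proof (rule h_fun_props(3)[OF fin False])
              fix q assume "q \<in> Pp"
              then have "q \<in> P" "g q = 1" by (auto simp: Pp_def)
              then show "dist x q \<ge> 2" using cond_lip[OF cg x \<open>q \<in> P\<close>] gm by simp
            qed
            then show ?thesis using gm by simp
          qed
        qed
        ultimately show ?thesis by blast
      qed
    qed
  qed
  then obtain e where "e \<in> E_set k" "\<forall>x\<in>P. e x = g x" by blast
  moreover have "Lam e = Lam g" using calculation(2) by (intro Lcong) auto
  ultimately have "e \<in> E_set k" "Lam f \<le> Lam e" using fg by simp_all
  then show ?thesis unfolding Lam_def by blast
qed



lemma nice_integrable:
  fixes M :: "'a::metric_space measure"
  assumes sM: "sets M = sets borel" and fM: "finite_measure M"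
    and h: "\<forall>x. \<bar>h x\<bar> \<le> 1" "\<forall>x y. \<bar>h x - h y\<bar> \<le> dist x y"
  shows "integrable M h"
proof -
  have "1-lipschitz_on UNIV h" using h(2) by (auto simp: lipschitz_on_def dist_real_def)
  then have "continuous_on UNIV h" by (rule lipschitz_on_continuous_on)
  then have "h \<in> borel_measurable borel" by (rule borel_measurable_continuous_onI)
  then have m: "h \<in> borel_measurable M" by (simp add: measurable_cong_sets[OF sM refl])
  show ?thesis
    by (rule finite_measure.integrable_const_bound[OF fM _ m, of 1]) (use h(1) in auto)
qed

lemma nice_integral_bound:
  fixes M :: "'a::metric_space measure"
  assumes sM: "sets M = sets borel" and fM: "finite_measure M"
    and h: "\<forall>x. \<bar>h x\<bar> \<le> 1" "\<forall>x y. \<bar>h x - h y\<bar> \<le> dist x y"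
  shows "\<bar>integral\<^sup>L M h\<bar> \<le> measure M UNIV"
proof -
  have sp: "space M = UNIV" using sets_eq_imp_space_eq[OF sM] by simp
  have i: "integrable M h" by (rule nice_integrable[OF sM fM h])
  have "\<bar>integral\<^sup>L M h\<bar> \<le> integral\<^sup>L M (\<lambda>x. \<bar>h x\<bar>)" by (rule integral_abs_bound)
  also have "\<dots> \<le> integral\<^sup>L M (\<lambda>x. 1)"
    by (rule integral_mono) (use i h(1) fM in \<open>auto simp: finite_measure.integrable_const\<close>)
  also have "\<dots> = measure M UNIV" using sp by simp
  finally show ?thesis .
qed

lemma approx_measure:
  fixes M :: "'a::metric_space measure" and d :: "nat \<Rightarrow> 'a"
  assumes sM: "sets M = sets borel" and fM: "finite_measure M" and S0: "S0 \<in> sets borel"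
    and mS0: "measure M S0 = measure M UNIV" and cov: "S0 \<subseteq> (\<Union>j. ball (d j) \<delta>)" and \<delta>: "\<delta> > 0"
  shows "\<exists>N0. \<forall>N\<ge>N0. \<forall>h. (\<forall>x. \<bar>h x\<bar> \<le> 1) \<and> (\<forall>x y. \<bar>h x - h y\<bar> \<le> dist x y) \<longrightarrow>
      \<bar>integral\<^sup>L M h - (\<Sum>j<N. h (d j) * measure M (ball (d j) \<delta> - (\<Union>i<j. ball (d i) \<delta>)))\<bar>
        \<le> \<delta> * measure M UNIV + \<delta>"
proof -
  interpret finite_measure M by (rule fM)
  have sp: "space M = UNIV" using sets_eq_imp_space_eq[OF sM] by simp
  have bs: "\<And>B. B \<in> sets borel \<Longrightarrow> B \<in> sets M" using sM by simp
  define U where "U = (\<lambda>N. \<Union>j<N. ball (d j) \<delta>)"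
  define W where "W = (\<Union>j. ball (d j) \<delta>)"
  have Us: "\<And>N. U N \<in> sets M" unfolding U_def by (intro bs borel_open) auto
  have Ws: "W \<in> sets M" unfolding W_def by (intro bs borel_open) auto
  have inc: "incseq U" unfolding U_def by (intro monoI UN_mono) auto
  have UW: "(\<Union>N. U N) = W" unfolding U_def W_def by auto
  have lim: "(\<lambda>N. measure M (U N)) \<longlonglongrightarrow> measure M W"
    using finite_Lim_measure_incseq[of U] Us inc UW by auto
  have "measure M S0 \<le> measure M W" using cov Ws unfolding W_def by (intro finite_measure_mono) auto
  moreover have "measure M W \<le> measure M UNIV"
    using finite_measure_mono[of W UNIV] sets.top[of M] sp by simp
  ultimately have mW: "measure M W = measure M UNIV" using mS0 by simp
  have "eventually (\<lambda>N. measure M UNIV - \<delta> < measure M (U N)) sequentially"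
    using order_tendstoD(1)[OF lim] mW \<delta> by simp
  then obtain N0 where N0: "\<And>N. N \<ge> N0 \<Longrightarrow> measure M UNIV - \<delta> < measure M (U N)"
    by (auto simp: eventually_sequentially)
  show ?thesis
  proof (intro exI allI impI)
    fix N and h :: "'a \<Rightarrow> real" assume N: "N0 \<le> N" and h: "(\<forall>x. \<bar>h x\<bar> \<le> 1) \<and> (\<forall>x y. \<bar>h x - h y\<bar> \<le> dist x y)"
    define A where "A = (\<lambda>j. ball (d j) \<delta> - (\<Union>i<j. ball (d i) \<delta>))"
    have As: "\<And>j. A j \<in> sets M" unfolding A_def by (intro bs) auto
    define s where "s = (\<lambda>x. \<Sum>j<N. h (d j) * indicator (A j) x)"
    have rest: "measure M (UNIV - U N) < \<delta>"
      using finite_measure_Diff[of UNIV "U N"] sets.top[of M] sp Us N0[OF N] by auto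
    have ih: "integrable M h" using nice_integrable[OF sM fM] h by blast
    have iA: "\<And>j. integrable M (indicator (A j) :: 'a \<Rightarrow> real)"
      using As by (intro integrable_real_indicator) (auto simp: less_top[symmetric])
    have is': "integrable M s" unfolding s_def using iA by (intro Bochner_Integration.integrable_sum integrable_mult_right) auto
    have ints: "integral\<^sup>L M s = (\<Sum>j<N. h (d j) * measure M (A j))"
      unfolding s_def
      by (subst Bochner_Integration.integral_sum)
         (use iA As in \<open>auto simp: Bochner_Integration.integral_indicator less_top[symmetric]\<close>)
    have pw: "\<bar>h x - s x\<bar> \<le> \<delta> + indicator (UNIV - U N) x" for x
    proof (cases "x \<in> U N")
      case True
      then have ex: "\<exists>j. x \<in> ball (d j) \<delta>" unfolding U_def by auto
      define j0 where "j0 = (LEAST j. x \<in> ball (d j) \<delta>)"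
      have j0in: "x \<in> ball (d j0) \<delta>" unfolding j0_def using ex by (rule LeastI_ex)
      have j0min: "\<And>i. i < j0 \<Longrightarrow> x \<notin> ball (d i) \<delta>" unfolding j0_def using not_less_Least by blast
      have j0N: "j0 < N"
      proof -
        obtain j where "j < N" "x \<in> ball (d j) \<delta>" using True unfolding U_def by auto
        then show ?thesis using j0min by (meson leI less_le_trans)
      qed
      have indA: "\<And>j. j < N \<Longrightarrow> indicator (A j) x = (if j = j0 then 1 else (0::real))"
      proof -
        fix j assume "j < N"
        show "indicator (A j) x = (if j = j0 then 1 else (0::real))"
        proof (cases "j = j0")
          case True then show ?thesis using j0in j0min by (auto simp: A_def indicator_def)
        next
          case False
          then have "j < j0 \<or> j0 < j" by auto
          then have "x \<notin> A j" using j0in j0min unfolding A_def by auto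
          then show ?thesis using False by simp
        qed
      qed
      have "s x = (\<Sum>j<N. if j = j0 then h (d j0) else 0)"
        unfolding s_def by (rule sum.cong) (auto simp: indA)
      also have "\<dots> = h (d j0)" using j0N by (simp add: sum.delta)
      finally have "s x = h (d j0)" .
      moreover have "\<bar>h x - h (d j0)\<bar> \<le> dist x (d j0)" using h by blast
      moreover have "dist x (d j0) < \<delta>" using j0in by (simp add: dist_commute)
      ultimately show ?thesis using True by simp
    next
      case False
      then have "\<And>j. j < N \<Longrightarrow> x \<notin> A j" unfolding U_def A_def by auto
      then have "s x = 0" unfolding s_def by (auto intro!: sum.neutral)
      moreover have "\<bar>h x\<bar> \<le> 1" using h by blast
      ultimately show ?thesis using False \<delta> by simp
    qed
    have ib: "integrable M (\<lambda>x. \<delta> + indicator (UNIV - U N) x :: real)"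
      using Us sets.top[of M] sp
      by (intro Bochner_Integration.integrable_add integrable_real_indicator)
         (auto simp: less_top[symmetric])
    have "\<bar>integral\<^sup>L M h - integral\<^sup>L M s\<bar> = \<bar>integral\<^sup>L M (\<lambda>x. h x - s x)\<bar>"
      using ih is' by (simp add: Bochner_Integration.integral_diff)
    also have "\<dots> \<le> integral\<^sup>L M (\<lambda>x. \<bar>h x - s x\<bar>)" by (rule integral_abs_bound)
    also have "\<dots> \<le> integral\<^sup>L M (\<lambda>x. \<delta> + indicator (UNIV - U N) x)"
      by (rule integral_mono) (use ih is' ib pw in auto)
    also have "\<dots> = \<delta> * measure M UNIV + measure M (UNIV - U N)"
      using Us sets.top[of M] sp
      by (subst Bochner_Integration.integral_add)
         (auto simp: Bochner_Integration.integral_indicator less_top[symmetric] integrable_real_indicator)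
    also have "\<dots> \<le> \<delta> * measure M UNIV + \<delta>" using rest by simp
    finally show "\<bar>integral\<^sup>L M h - (\<Sum>j<N. h (d j) * measure M (ball (d j) \<delta> - (\<Union>i<j. ball (d i) \<delta>)))\<bar>
        \<le> \<delta> * measure M UNIV + \<delta>" using ints unfolding A_def by simp
  qed
qed



lemma ball_nice:
  assumes "h \<in> unit_ball k UNIV"
  shows "(\<forall>x. \<bar>h x\<bar> \<le> 1) \<and> (\<forall>x y. \<bar>h x - h y\<bar> \<le> dist x y)"
  using ball_cond[OF assms] cond_lip[OF ball_cond[OF assms]] by (auto simp: cond_def)

lemma dense_cover:
  fixes S0 :: "'a::metric_space set"
  assumes "separable_space (top_of_set S0)" "\<delta> > 0"
  shows "\<exists>d::nat \<Rightarrow> 'a. S0 \<subseteq> (\<Union>j. ball (d j) \<delta>)"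
proof -
  obtain C where C: "countable C" "C \<subseteq> S0" "(top_of_set S0) closure_of C = S0"
    using assms(1) unfolding separable_space_def by auto
  have "S0 \<inter> C = C" using C(2) by auto
  then have "S0 \<inter> closure C = S0"
    using C(3) by (simp add: closure_of_subtopology euclidean_closure_of)
  then have "S0 \<subseteq> closure C" by blast
  show ?thesis
  proof (cases "C = {}")
    case True
    then show ?thesis using \<open>S0 \<subseteq> closure C\<close> by auto
  next
    case False
    show ?thesis
    proof (rule exI[of _ "from_nat_into C"], rule subsetI)
      fix x assume "x \<in> S0"
      then have "x \<in> closure C" using \<open>S0 \<subseteq> closure C\<close> by auto
      then obtain y where "y \<in> C" "dist y x < \<delta>" using assms(2) closure_approachable by blast
      moreover obtain n where "from_nat_into C n = y" using from_nat_into_surj[OF C(1) \<open>y \<in> C\<close>] by auto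
      ultimately show "x \<in> (\<Union>j. ball (from_nat_into C j) \<delta>)" by auto
    qed
  qed
qed

theorem corollary5p6:
  fixes mp mn :: "'a::metric_space measure" and k :: bl_kind
  assumes "sets mp = sets borel" and "sets mn = sets borel"
    and "finite_measure mp" and "finite_measure mn"
    and "\<exists>A\<in>sets borel. emeasure mp A = 0 \<and> emeasure mn (UNIV - A) = 0"
    and "\<exists>S0\<in>sets borel. separable_space (top_of_set S0) \<and>
           emeasure mp S0 + emeasure mn S0 = emeasure mp UNIV + emeasure mn UNIV"
  shows "dual_norm k mp mn = Sup (signed_integral mp mn ` E_set k)"
proof -
  note sp = assms(1) and sn = assms(2) and fp = assms(3) and fn = assms(4)
  have spp: "space mp = UNIV" using sets_eq_imp_space_eq[OF sp] by simp
  have snn: "space mn = UNIV" using sets_eq_imp_space_eq[OF sn] by simp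
  obtain S0 where S0: "S0 \<in> sets borel" "separable_space (top_of_set S0)"
    "emeasure mp S0 + emeasure mn S0 = emeasure mp UNIV + emeasure mn UNIV"
    using assms(6) by auto
  have e: "ennreal (measure mp S0) + ennreal (measure mn S0) = ennreal (measure mp UNIV) + ennreal (measure mn UNIV)"
    using S0(3) by (simp add: finite_measure.emeasure_eq_measure[OF fp] finite_measure.emeasure_eq_measure[OF fn])
  have "ennreal (measure mp S0 + measure mn S0) = ennreal (measure mp UNIV + measure mn UNIV)"
    using e by (simp only: ennreal_plus[OF measure_nonneg measure_nonneg])
  then have sum_eq: "measure mp S0 + measure mn S0 = measure mp UNIV + measure mn UNIV"
    by (subst (asm) ennreal_inj) (auto intro: add_nonneg_nonneg)
  have le1: "measure mp S0 \<le> measure mp UNIV"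
    using finite_measure.finite_measure_mono[OF fp, of S0 UNIV] sets.top[of mp] spp by simp
  have le2: "measure mn S0 \<le> measure mn UNIV"
    using finite_measure.finite_measure_mono[OF fn, of S0 UNIV] sets.top[of mn] snn by simp
  have m1: "measure mp S0 = measure mp UNIV" and m2: "measure mn S0 = measure mn UNIV"
    using sum_eq le1 le2 by linarith+
  define I where "I = signed_integral mp mn"
  define T where "T = measure mp UNIV + measure mn UNIV"
  have T0: "T \<ge> 0" unfolding T_def by simp
  have Ibound: "\<bar>I h\<bar> \<le> T" if "h \<in> unit_ball k UNIV" for h
  proof -
    have "\<bar>integral\<^sup>L mp h\<bar> \<le> measure mp UNIV" "\<bar>integral\<^sup>L mn h\<bar> \<le> measure mn UNIV"
      using nice_integral_bound[OF sp fp] nice_integral_bound[OF sn fn] ball_nice[OF that] by auto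
    then show ?thesis unfolding I_def T_def signed_integral_def by linarith
  qed
  have bddB: "bdd_above (I ` unit_ball k UNIV)"
    using Ibound by (intro bdd_aboveI2[of _ _ T]) (auto simp: abs_le_iff)
  have sub: "I ` E_set k \<subseteq> I ` unit_ball k UNIV" using E_sub_ball by auto
  have bddE: "bdd_above (I ` E_set k)" using bdd_above_mono[OF bddB sub] .
  have one_E: "(\<lambda>_. 1) \<in> E_set k"
    using const_ball[of 1 FM] unfolding E_set_def by (cases k) auto
  have Ene: "I ` E_set k \<noteq> {}" using one_E by auto
  have Bne: "I ` unit_ball k UNIV \<noteq> {}" using const_ball[of 1 k] by auto
  have main: "I f \<le> Sup (I ` E_set k)" if f: "f \<in> unit_ball k UNIV" for f
  proof (rule field_le_epsilon)
    fix \<epsilon> :: real assume \<epsilon>: "\<epsilon> > 0"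
    define \<delta> where "\<delta> = (\<epsilon> / 2) / (T + 2)"
    have \<delta>0: "\<delta> > 0" unfolding \<delta>_def using \<epsilon> T0 by (intro divide_pos_pos) auto
    have T2: "T + 2 \<noteq> 0" using T0 by simp
    have \<delta>e: "\<delta> * (T + 2) = \<epsilon> / 2" by (subst nonzero_eq_divide_eq[symmetric, OF T2]) (rule \<delta>_def)
    obtain d :: "nat \<Rightarrow> 'a" where cov: "S0 \<subseteq> (\<Union>j. ball (d j) \<delta>)" using dense_cover[OF S0(2) \<delta>0] ..
    define A where "A = (\<lambda>j. ball (d j) \<delta> - (\<Union>i<j. ball (d i) \<delta>))"
    obtain N1 where N1: "\<forall>N\<ge>N1. \<forall>h. (\<forall>x. \<bar>h x\<bar> \<le> 1) \<and> (\<forall>x y. \<bar>h x - h y\<bar> \<le> dist x y) \<longrightarrow>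
      \<bar>integral\<^sup>L mp h - (\<Sum>j<N. h (d j) * measure mp (ball (d j) \<delta> - (\<Union>i<j. ball (d i) \<delta>)))\<bar>
        \<le> \<delta> * measure mp UNIV + \<delta>"
      using approx_measure[OF sp fp S0(1) m1 cov \<delta>0] ..
    obtain N2 where N2: "\<forall>N\<ge>N2. \<forall>h. (\<forall>x. \<bar>h x\<bar> \<le> 1) \<and> (\<forall>x y. \<bar>h x - h y\<bar> \<le> dist x y) \<longrightarrow>
      \<bar>integral\<^sup>L mn h - (\<Sum>j<N. h (d j) * measure mn (ball (d j) \<delta> - (\<Union>i<j. ball (d i) \<delta>)))\<bar>
        \<le> \<delta> * measure mn UNIV + \<delta>"
      using approx_measure[OF sn fn S0(1) m2 cov \<delta>0] ..
    define N where "N = max (max N1 N2) 1"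
    define c where "c = (\<lambda>j. measure mp (A j) - measure mn (A j))"
    define Lam where "Lam = (\<lambda>h::'a\<Rightarrow>real. \<Sum>j<N. c j * h (d j))"
    have appr: "\<bar>I h - Lam h\<bar> \<le> \<epsilon> / 2" if h: "h \<in> unit_ball k UNIV" for h
    proof -
      have NN: "N1 \<le> N" "N2 \<le> N" by (simp_all add: N_def)
      have a1: "\<bar>integral\<^sup>L mp h - (\<Sum>j<N. h (d j) * measure mp (A j))\<bar> \<le> \<delta> * measure mp UNIV + \<delta>"
        unfolding A_def by (rule N1[rule_format, OF NN(1)]) (rule ball_nice[OF h])
      have a2: "\<bar>integral\<^sup>L mn h - (\<Sum>j<N. h (d j) * measure mn (A j))\<bar> \<le> \<delta> * measure mn UNIV + \<delta>"
        unfolding A_def by (rule N2[rule_format, OF NN(2)]) (rule ball_nice[OF h])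
      have "Lam h = (\<Sum>j<N. h (d j) * measure mp (A j)) - (\<Sum>j<N. h (d j) * measure mn (A j))"
        unfolding Lam_def c_def by (simp add: sum_subtractf[symmetric] algebra_simps)
      then have "\<bar>I h - Lam h\<bar> \<le> \<delta> * T + 2 * \<delta>"
        using a1 a2 unfolding I_def signed_integral_def T_def by (simp add: algebra_simps)
      also have "\<dots> = \<epsilon> / 2" using \<delta>e by (simp add: algebra_simps)
      finally show ?thesis .
    qed
    have N0: "N \<noteq> 0" by (simp add: N_def)
    have P: "finite (d ` {..<N})" "d ` {..<N} \<noteq> {}" using N0 by (auto simp: lessThan_empty_iff)
    obtain e where e: "e \<in> E_set k" "Lam f \<le> Lam e"
      using key_finite[OF f P, of N d c] unfolding Lam_def by auto
    have eB: "e \<in> unit_ball k UNIV" using E_sub_ball e(1) by auto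
    have "I f \<le> Lam f + \<epsilon> / 2" using appr[OF f] by linarith
    also have "\<dots> \<le> Lam e + \<epsilon> / 2" using e(2) by simp
    also have "\<dots> \<le> I e + \<epsilon>" using appr[OF eB] by linarith
    also have "I e \<le> Sup (I ` E_set k)" using e(1) bddE by (intro cSup_upper) auto
    then have "I e + \<epsilon> \<le> Sup (I ` E_set k) + \<epsilon>" by simp
    finally show "I f \<le> Sup (I ` E_set k) + \<epsilon>" .
  qed
  have "Sup (I ` unit_ball k UNIV) \<le> Sup (I ` E_set k)"
    using Bne main by (intro cSup_least) auto
  moreover have "Sup (I ` E_set k) \<le> Sup (I ` unit_ball k UNIV)"
    by (rule cSup_subset_mono[OF Ene bddB sub])
  ultimately show ?thesis unfolding dual_norm_def I_def by simp
qed

end
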